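(* Let $I$ be the $2\times2$ identity, $e_1=\begin{pmatrix}1&0\\0&-1\end{pmatrix}$, $e_2=\begin{pmatrix}0&1\\1&0\end{pmatrix}$, $E=e_1e_2$, and let $V=\mathrm{span}_{\mathbb{R}}\{e_1,e_2\}$ with the Euclidean norm for which $\{e_1,e_2\}$ is orthonormal, i.e. $\|\gamma_1e_1+\gamma_2e_2\|=\sqrt{\gamma_1^2+\gamma_2^2}$. Let $A,B\in M_2(\mathbb{R})$ with $A=\alpha_0I+\alpha_{12}E+u$ and $B=\beta_0I+\beta_{12}E+v$, where $\alpha_0,\alpha_{12},\beta_0,\beta_{12}\in\mathbb{R}$ and $u,v\in V$. Then there exists $P\in O(2)$ with $PAP^{-1}=B$ if and only if $\alpha_0=\beta_0$, $\alpha_{12}=\pm\beta_{12}$ and $\|u\|=\|v\|$.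
   Context: $O(2)=\{P\in M_2(\mathbb{R}): PP^t=I\}$ is the real orthogonal group. *)

theory Defs
  imports "HOL-Analysis.Analysis"
begin

type_synonym mat2 = "real ^ 2 ^ 2"

definition mk2 :: "real \<Rightarrow> real \<Rightarrow> real \<Rightarrow> real \<Rightarrow> mat2" where
  "mk2 a b c d = (\<chi> i j. if i = 1 then (if j = 1 then a else b) else (if j = 1 then c else d))"

definition e1 :: mat2 where "e1 = mk2 1 0 0 (-1)"
definition e2 :: mat2 where "e2 = mk2 0 1 1 0"
definition EE :: mat2 where "EE = e1 ** e2"

definition O2 :: "mat2 set" where
  "O2 = {P. P ** transpose P = mat 1}"

end

theory Submission imports Defs begin

lemma mat2_eq: "(M::mat2) = N \<longleftrightarrow> M$1$1 = N$1$1 \<and> M$1$2 = N$1$2 \<and> M$2$1 = N$2$1 \<and> M$2$2 = N$2$2"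
  by (auto simp: vec_eq_iff forall_2)

lemma mat2_form: fixes a0 a12 g1 g2 :: real
  shows "(a0 *\<^sub>R mat 1 + a12 *\<^sub>R EE + (g1 *\<^sub>R e1 + g2 *\<^sub>R e2)) = mk2 (a0+g1) (a12+g2) (g2-a12) (a0-g1)"
  by (simp add: mat2_eq mk2_def EE_def e1_def e2_def matrix_matrix_mult_def sum_2 mat_def)

lemma conj_mk2: "mk2 p q r s ** mk2 a b c d ** transpose (mk2 p q r s) =
   mk2 ((p*a+q*c)*p + (p*b+q*d)*q) ((p*a+q*c)*r + (p*b+q*d) * s)
       ((r*a+s*c)*p + (r*b+s*d)*q) ((r*a+s*c)*r + (r*b+s*d) * s)"
  by (simp add: mat2_eq mk2_def matrix_matrix_mult_def sum_2 transpose_def)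

lemma O2_mk2: "mk2 p q r s \<in> O2 \<longleftrightarrow> p*p+q*q = 1 \<and> p*r+q* s = 0 \<and> r*r+s* s=1"
  by (auto simp add: O2_def mat2_eq mk2_def matrix_matrix_mult_def sum_2 transpose_def mat_def; simp add: mult.commute)

lemma mk2_ex: "(M::mat2) = mk2 (M$1$1) (M$1$2) (M$2$1) (M$2$2)"
  by (simp add: mat2_eq mk2_def)

lemma inv_O2: assumes "P \<in> O2" shows "matrix_inv P = transpose P"
proof -
  have 1: "P ** transpose P = mat 1" using assms by (simp add: O2_def)
  hence 2: "transpose P ** P = mat 1" using matrix_left_right_inverse by blast
  have "P ** matrix_inv P = mat 1 \<and> matrix_inv P ** P = mat 1"
    unfolding matrix_inv_def by (rule someI[of _ "transpose P"]) (use 1 2 in auto)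
  hence "matrix_inv P = matrix_inv P ** (P ** transpose P)" using 1 by simp
  also have "\<dots> = transpose P" using \<open>_ \<and> _\<close> by (simp add: matrix_mul_assoc)
  finally show ?thesis .
qed

lemma orth_param:
  fixes p q r s :: real
  assumes "p*p+q*q = 1" "p*r+q * s = 0" "r*r+s * s=1"
  shows "\<exists>t. r = -t*q \<and> s = t*p \<and> t^2 = 1"
proof -
  obtain t where t: "t = p * s - q*r" by blast
  have r: "r = -t*q"
  proof -
    have "r = r*(p*p+q*q)" using assms by simp
    also have "\<dots> = -t*q" using assms(2) t by algebra
    finally show ?thesis .
  qed
  have s: "s = t*p"
  proof -
    have "s = s*(p*p+q*q)" using assms by simp
    also have "\<dots> = t*p" using assms(2) t by algebra
    finally show ?thesis .
  qed
  have "1 = r*r+s * s" using assms by simp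
  also have "\<dots> = t^2 * (p*p+q*q)" unfolding r s by (simp add: power2_eq_square algebra_simps)
  finally show ?thesis using r s assms by auto
qed

lemma mk2_nth[simp]: "mk2 a b c d $ 1 $ 1 = a" "mk2 a b c d $ 1 $ 2 = b" "mk2 a b c d $ 2 $ 1 = c" "mk2 a b c d $ 2 $ 2 = d"
  by (simp_all add: mk2_def)

lemma forward:
  fixes a0 a12 b0 b12 g1 g2 d1 d2 p q t :: real
  assumes "p*p+q*q = 1" "t^2 = 1"
    and "mk2 p q (-t*q) (t*p) ** mk2 (a0+g1) (a12+g2) (g2-a12) (a0-g1) ** transpose (mk2 p q (-t*q) (t*p))
        = mk2 (b0+d1) (b12+d2) (d2-b12) (b0-d1)"
  shows "a0 = b0 \<and> (a12 = b12 \<or> a12 = - b12) \<and> g1^2+g2^2 = d1^2+d2^2"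
proof -
  have e: "b0+d1 = (p * (a0+g1)+q * (g2-a12)) * p + (p * (a12+g2)+q * (a0-g1)) * q" "b12+d2 = (p * (a0+g1)+q * (g2-a12)) * (-t * q) + (p * (a12+g2)+q * (a0-g1)) * (t * p)" "d2-b12 = ((-t * q) * (a0+g1)+(t * p) * (g2-a12)) * p + ((-t * q) * (a12+g2)+(t * p) * (a0-g1)) * q" "b0-d1 = ((-t * q) * (a0+g1)+(t * p) * (g2-a12)) * (-t * q) + ((-t * q) * (a12+g2)+(t * p) * (a0-g1)) * (t * p)"
    using assms(3) unfolding conj_mk2 mat2_eq by simp_all
  have "b0 = a0" using e assms(1,2) by algebra
  moreover have "b12 = t*a12" using e assms(1,2) by algebra
  moreover have "d1^2+d2^2 = g1^2+g2^2" using e assms(1,2) by algebra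
  moreover have "t = 1 \<or> t = -1" using assms(2) by (simp add: power2_eq_1_iff)
  ultimately show ?thesis by auto
qed

lemma backward_conj:
  fixes a0 a12 g1 g2 p q t :: real
  assumes "p*p+q*q = 1" "t^2 = 1"
  shows "mk2 p q (-t*q) (t*p) ** mk2 (a0+g1) (a12+g2) (g2-a12) (a0-g1) ** transpose (mk2 p q (-t*q) (t*p))
     = mk2 (a0 + ((p^2-q^2)*g1 + 2*p*q*g2)) (t*a12 + t*(-2*p*q*g1 + (p^2-q^2)*g2))
           (t*(-2*p*q*g1 + (p^2-q^2)*g2) - t*a12) (a0 - ((p^2-q^2)*g1 + 2*p*q*g2))"
  unfolding conj_mk2 mat2_eq mk2_nth using assms by algebra

lemma half_angle:
  fixes C S :: real
  assumes "C^2 + S^2 = 1"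
  shows "\<exists>p q. p*p+q*q = 1 \<and> p^2-q^2 = C \<and> 2*p*q = S"
proof -
  obtain th where th: "C = cos th" "S = sin th" using sincos_total_2pi[OF assms] by metis
  show ?thesis
    by (rule exI[of _ "cos (th/2)"], rule exI[of _ "sin (th/2)"])
       (use cos_double[of "th/2"] sin_double[of "th/2"] th in \<open>auto simp: power2_eq_square[symmetric]\<close>)
qed

lemma unit_ratio:
  fixes g1 g2 e1 e2 :: real
  assumes "g1^2+g2^2 = e1^2+e2^2"
  shows "\<exists>C S. C^2+S^2 = 1 \<and> C*g1 + S*g2 = e1 \<and> -S*g1 + C*g2 = e2"
proof (cases "g1^2+g2^2 = 0")
  case True
  then have "g1 = 0" "g2 = 0" "e1 = 0" "e2 = 0" using assms by (auto simp: sum_power2_eq_zero_iff)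
  then show ?thesis by (intro exI[of _ 1] exI[of _ 0]) simp
next
  case False
  define n where "n = g1^2+g2^2"
  have n: "n \<noteq> 0" using False n_def by simp
  show ?thesis
  proof (intro exI conjI)
    show "((g1*e1+g2*e2)/n)^2 + ((g2*e1-g1*e2)/n)^2 = 1"
    proof -
      have "(g1*e1+g2*e2)^2 + (g2*e1-g1*e2)^2 = n*n" using assms n_def by algebra
      then show ?thesis using n by (simp add: power_divide add_divide_distrib[symmetric] power2_eq_square)
    qed
    have "(g1*e1+g2*e2)*g1 + (g2*e1-g1*e2)*g2 = e1*n" unfolding n_def by algebra
    then show "(g1*e1+g2*e2)/n*g1 + (g2*e1-g1*e2)/n*g2 = e1"
      using n by (simp add: field_simps)
    have "- (g2*e1-g1*e2)*g1 + (g1*e1+g2*e2)*g2 = e2*n" unfolding n_def by algebra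
    moreover have "- ((g2*e1-g1*e2)/n)*g1 + (g1*e1+g2*e2)/n*g2 = (- (g2*e1-g1*e2)*g1 + (g1*e1+g2*e2)*g2)/n"
      using n by (simp add: field_simps)
    ultimately show "- ((g2*e1-g1*e2)/n)*g1 + (g1*e1+g2*e2)/n*g2 = e2"
      using n by simp
  qed
qed

theorem mainTheorem9:
  fixes \<alpha>0 \<alpha>12 \<beta>0 \<beta>12 \<gamma>1 \<gamma>2 \<delta>1 \<delta>2 :: real and A B :: mat2
  assumes "A = \<alpha>0 *\<^sub>R mat 1 + \<alpha>12 *\<^sub>R EE + (\<gamma>1 *\<^sub>R e1 + \<gamma>2 *\<^sub>R e2)"
    and "B = \<beta>0 *\<^sub>R mat 1 + \<beta>12 *\<^sub>R EE + (\<delta>1 *\<^sub>R e1 + \<delta>2 *\<^sub>R e2)"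
  shows "(\<exists>P\<in>O2. P ** A ** matrix_inv P = B) \<longleftrightarrow>
         (\<alpha>0 = \<beta>0 \<and> (\<alpha>12 = \<beta>12 \<or> \<alpha>12 = - \<beta>12) \<and>
          sqrt (\<gamma>1\<^sup>2 + \<gamma>2\<^sup>2) = sqrt (\<delta>1\<^sup>2 + \<delta>2\<^sup>2))"
proof -
  have A: "A = mk2 (\<alpha>0+\<gamma>1) (\<alpha>12+\<gamma>2) (\<gamma>2-\<alpha>12) (\<alpha>0-\<gamma>1)" using assms(1) mat2_form by simp
  have B: "B = mk2 (\<beta>0+\<delta>1) (\<beta>12+\<delta>2) (\<delta>2-\<beta>12) (\<beta>0-\<delta>1)" using assms(2) mat2_form by simp
  show ?thesis
  proof
    assume "\<exists>P\<in>O2. P ** A ** matrix_inv P = B"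
    then obtain P where P: "P \<in> O2" "P ** A ** transpose P = B" using inv_O2 by metis
    obtain p q r s where Pe: "P = mk2 p q r s" using mk2_ex by metis
    have o: "p*p+q*q = 1" "p*r+q * s = 0" "r*r+s * s=1" using P(1) unfolding Pe O2_mk2 by auto
    obtain t where t: "r = -t*q" "s = t*p" "t^2 = 1" using orth_param[OF o] by blast
    have "\<alpha>0 = \<beta>0 \<and> (\<alpha>12 = \<beta>12 \<or> \<alpha>12 = - \<beta>12) \<and> \<gamma>1^2+\<gamma>2^2 = \<delta>1^2+\<delta>2^2"
      using forward[OF o(1) t(3)] P(2) unfolding Pe A B t by blast
    then show "\<alpha>0 = \<beta>0 \<and> (\<alpha>12 = \<beta>12 \<or> \<alpha>12 = - \<beta>12) \<and>
          sqrt (\<gamma>1\<^sup>2 + \<gamma>2\<^sup>2) = sqrt (\<delta>1\<^sup>2 + \<delta>2\<^sup>2)" by simp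
  next
    assume H: "\<alpha>0 = \<beta>0 \<and> (\<alpha>12 = \<beta>12 \<or> \<alpha>12 = - \<beta>12) \<and>
          sqrt (\<gamma>1\<^sup>2 + \<gamma>2\<^sup>2) = sqrt (\<delta>1\<^sup>2 + \<delta>2\<^sup>2)"
    obtain t :: real where t: "t^2 = 1" "\<beta>12 = t*\<alpha>12"
      using H by (metis mult_1 mult_minus1 power2_minus one_power2 minus_minus)
    have nn: "\<gamma>1^2+\<gamma>2^2 = \<delta>1^2+(t*\<delta>2)^2" using H t(1) by (simp add: power_mult_distrib)
    obtain C S where CS: "C^2+S^2 = 1" "C*\<gamma>1 + S*\<gamma>2 = \<delta>1" "-S*\<gamma>1 + C*\<gamma>2 = t*\<delta>2"
      using unit_ratio[OF nn] by blast
    obtain p q where pq: "p*p+q*q = 1" "p^2-q^2 = C" "2*p*q = S" using half_angle[OF CS(1)] by blast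
    have PO: "mk2 p q (-t*q) (t*p) \<in> O2" unfolding O2_mk2 using pq(1) t(1) by algebra
    have d2: "\<delta>2 = t*(t*\<delta>2)" using t(1) by algebra
    have "mk2 p q (-t*q) (t*p) ** A ** matrix_inv (mk2 p q (-t*q) (t*p)) = B"
      unfolding inv_O2[OF PO] A B backward_conj[OF pq(1) t(1)] 
      using H t CS pq d2 by (simp add: mat2_eq)
    then show "\<exists>P\<in>O2. P ** A ** matrix_inv P = B" using PO by blast
  qed
qed

end
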